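(* Let $A:\mathbb{R}^d\rightrightarrows\mathbb{R}^d$ be maximal monotone with $A^{-1}(0)\neq\emptyset$, let $p\geq1$ be an integer, $\sigma\in(0,1)$, $\theta>0$, $x_0\in\mathbb{R}^d$, and suppose $\lambda_k>0$, $y_k,v_k,x_k\in\mathbb{R}^d$, $\epsilon_k\geq0$ satisfy for every $k\geq0$: $v_{k+1}\in A^{\epsilon_{k+1}}(y_{k+1})$, $\|\lambda_{k+1}v_{k+1}+y_{k+1}-x_k\|^2+2\lambda_{k+1}\epsilon_{k+1}\leq\sigma^2\|y_{k+1}-x_k\|^2$, $\lambda_{k+1}\|y_{k+1}-x_k\|^{p-1}\geq\theta$, and $x_{k+1}=x_k-\lambda_{k+1}v_{k+1}$. For $z\in\mathbb{R}^d$ let $\mathcal{E}_k=\frac12\|x_k-z\|^2$. Then for every integer $k\geq1$, \[ \sum_{i=1}^k\lambda_i\langle v,y_i-z\rangle+\frac{1-\sigma^2}{2}\sum_{i=1}^k\|x_{i-1}-y_i\|^2\leq\mathcal{E}_0-\mathcal{E}_k\quad\text{for all }v\in Az. \] Consequently, with $\tilde y_k=\frac1{\sum_{i=1}^k\lambda_i}\sum_{i=1}^k\lambda_iy_i$, $\sup_{v\in Az}\langle v,\tilde y_k-z\rangle\leq\frac{\mathcal{E}_0}{\sum_{i=1}^k\lambda_i}$, and, since $\sigma<1$, $\sum_{i=1}^k\|x_{i-1}-y_i\|^2\leq\frac{\|x_0-z^\star\|^2}{1-\sigma^2}$ for any $z^\star\in A^{-1}(0)$.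
   Context: The $\epsilon$-enlargement is $A^{\epsilon}(x)=\{v\in\mathbb{R}^d:\langle x-\tilde x,v-\tilde v\rangle\geq-\epsilon\ \forall\tilde x\in\mathbb{R}^d,\ \forall\tilde v\in A\tilde x\}$. *)

theory Defs
  imports "HOL-Analysis.Analysis"
begin

definition monotone_op :: "('a::real_inner \<Rightarrow> 'a set) \<Rightarrow> bool" where
  "monotone_op A \<longleftrightarrow> (\<forall>x y u w. u \<in> A x \<longrightarrow> w \<in> A y \<longrightarrow> inner (x - y) (u - w) \<ge> 0)"

definition maximal_monotone :: "('a::real_inner \<Rightarrow> 'a set) \<Rightarrow> bool" where
  "maximal_monotone A \<longleftrightarrow> monotone_op A \<and>
     (\<forall>B. monotone_op B \<and> (\<forall>x. A x \<subseteq> B x) \<longrightarrow> B = A)"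

definition enlargement :: "('a::real_inner \<Rightarrow> 'a set) \<Rightarrow> real \<Rightarrow> 'a \<Rightarrow> 'a set" where
  "enlargement A \<epsilon> x = {w. \<forall>x' w'. w' \<in> A x' \<longrightarrow> inner (x - x') (w - w') \<ge> - \<epsilon>}"

end

theory Submission
  imports Defs
begin

lemma aux_lin:
  fixes V P N e T Q W X M R :: real
  assumes "V - 2 * P + N + 2 * e \<le> T" "- e \<le> R" "X = P + Q" "R = Q - W"
  shows "W + (N / 2 - T / 2) \<le> 1 / 2 * M - 1 / 2 * (M - 2 * X + V)"
proof -
  have "W + (N / 2 - T / 2) \<le> X - V / 2" using assms by linarith
  moreover have "1 / 2 * M - 1 / 2 * (M - 2 * X + V) = X - V / 2" by (simp add: algebra_simps)
  ultimately show ?thesis by simp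
qed
lemma step:
  fixes x y v z w :: "'a::real_inner" and lam eps \<sigma> :: real
  assumes "lam > 0" "inner (y - z) (v - w) \<ge> - eps"
    "(norm (lam *\<^sub>R v + y - x))\<^sup>2 + 2 * lam * eps \<le> \<sigma>\<^sup>2 * (norm (y - x))\<^sup>2"
  shows "lam * inner w (y - z) + (1 - \<sigma>\<^sup>2) / 2 * (norm (x - y))\<^sup>2
         \<le> (1/2) * (norm (x - z))\<^sup>2 - (1/2) * (norm (x - lam *\<^sub>R v - z))\<^sup>2"
proof -
  have a: "lam * inner (y - z) (v - w) \<ge> - (lam * eps)" using mult_left_mono[OF assms(2), of lam] assms(1) by simp
  have nd: "\<And>a b::'a. (norm (a - b))\<^sup>2 = inner a a - 2 * inner a b + inner b b"
    by (simp add: power2_norm_eq_inner inner_diff_left inner_diff_right inner_commute)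
  have sq: "\<And>a::'a. inner a a = (norm a)\<^sup>2" by (simp add: power2_norm_eq_inner)
  have ll: "inner (lam *\<^sub>R v) (lam *\<^sub>R v) = lam\<^sup>2 * inner v v"
    by (simp add: power2_eq_square)
  have n1: "(norm (lam *\<^sub>R v + y - x))\<^sup>2 = lam\<^sup>2 * inner v v - 2 * (lam * inner v (x - y)) + (norm (x - y))\<^sup>2"
  proof -
    have e: "lam *\<^sub>R v + y - x = lam *\<^sub>R v - (x - y)" by (simp add: algebra_simps)
    show ?thesis unfolding e nd[of "lam *\<^sub>R v" "x - y"] sq[of "x - y"] by (simp add: power2_eq_square)
  qed
  have n2: "(norm (x - lam *\<^sub>R v - z))\<^sup>2 = (norm (x - z))\<^sup>2 - 2 * (lam * inner v (x - z)) + lam\<^sup>2 * inner v v"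
  proof -
    have e: "x - lam *\<^sub>R v - z = (x - z) - lam *\<^sub>R v" by (simp add: algebra_simps)
    show ?thesis unfolding e nd[of "x - z" "lam *\<^sub>R v"] sq[of "x - z"] by (simp add: power2_eq_square inner_commute)
  qed
  have n3: "(norm (y - x))\<^sup>2 = (norm (x - y))\<^sup>2" by (simp add: norm_minus_commute)
  have i1: "lam * inner v (x - z) = lam * inner v (x - y) + lam * inner (y - z) v"
    by (simp add: inner_simps inner_commute algebra_simps)
  have i2: "lam * inner (y - z) (v - w) = lam * inner (y - z) v - lam * inner w (y - z)"
    by (simp add: inner_simps inner_commute algebra_simps)
  have s1: "(1 - \<sigma>\<^sup>2) / 2 * (norm (x - y))\<^sup>2 = (norm (x - y))\<^sup>2 / 2 - \<sigma>\<^sup>2 * (norm (x - y))\<^sup>2 / 2"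
    by (simp add: field_simps)
  have s2: "2 * lam * eps = 2 * (lam * eps)" by simp
  have h: "lam\<^sup>2 * inner v v - 2 * (lam * inner v (x - y)) + (norm (x - y))\<^sup>2 + 2 * (lam * eps)
      \<le> \<sigma>\<^sup>2 * (norm (x - y))\<^sup>2" using assms(3) unfolding n1 n3 s2 .
  show ?thesis unfolding n2 s1 by (rule aux_lin[OF h a i1 i2])
qed



theorem lemma4p1:
  fixes A :: "'a::euclidean_space \<Rightarrow> 'a set"
    and p :: nat and \<sigma> \<theta> :: real
    and lam eps :: "nat \<Rightarrow> real"
    and x y v :: "nat \<Rightarrow> 'a"
  assumes maxmon: "maximal_monotone A"
    and zeros: "\<exists>z. 0 \<in> A z"
    and p: "p \<ge> 1"
    and sigma: "0 < \<sigma>" "\<sigma> < 1"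
    and theta: "\<theta> > 0"
    and lam_pos: "\<And>k. lam (Suc k) > 0"
    and eps_nonneg: "\<And>k. eps (Suc k) \<ge> 0"
    and incl: "\<And>k. v (Suc k) \<in> enlargement A (eps (Suc k)) (y (Suc k))"
    and err: "\<And>k. (norm (lam (Suc k) *\<^sub>R v (Suc k) + y (Suc k) - x k))\<^sup>2
                    + 2 * lam (Suc k) * eps (Suc k) \<le> \<sigma>\<^sup>2 * (norm (y (Suc k) - x k))\<^sup>2"
    and large: "\<And>k. lam (Suc k) * norm (y (Suc k) - x k) ^ (p - 1) \<ge> \<theta>"
    and upd: "\<And>k. x (Suc k) = x k - lam (Suc k) *\<^sub>R v (Suc k)"
  shows "\<forall>z k. k \<ge> 1 \<longrightarrow>
           (let E = (\<lambda>j. (1/2) * (norm (x j - z))\<^sup>2);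
                ytil = (1 / (\<Sum>i=1..k. lam i)) *\<^sub>R (\<Sum>i=1..k. lam i *\<^sub>R y i) in
            (\<forall>w\<in>A z. (\<Sum>i=1..k. lam i * inner w (y i - z))
                 + (1 - \<sigma>\<^sup>2) / 2 * (\<Sum>i=1..k. (norm (x (i - 1) - y i))\<^sup>2) \<le> E 0 - E k)
          \<and> (\<forall>w\<in>A z. inner w (ytil - z) \<le> E 0 / (\<Sum>i=1..k. lam i))
          \<and> (\<forall>zs. 0 \<in> A zs \<longrightarrow>
                (\<Sum>i=1..k. (norm (x (i - 1) - y i))\<^sup>2) \<le> (norm (x 0 - zs))\<^sup>2 / (1 - \<sigma>\<^sup>2)))"
proof (intro allI impI)
  fix z k assume k: "(1::nat) \<le> k"
  define E where "E = (\<lambda>j. (1/2) * (norm (x j - z))\<^sup>2)"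
  define \<Lambda> where "\<Lambda> = (\<Sum>i=1..k. lam i)"
  define S where "S = (\<Sum>i=1..k. (norm (x (i - 1) - y i))\<^sup>2)"
  have S0: "S \<ge> 0" unfolding S_def by (simp add: sum_nonneg)
  have Lpos: "\<Lambda> > 0" unfolding \<Lambda>_def
  proof (rule sum_pos)
    show "finite {1..k}" by simp
    show "{1..k} \<noteq> {}" using k by simp
    fix i assume "i \<in> {1..k}"
    then have "i = Suc (i - 1)" by simp
    then show "lam i > 0" using lam_pos[of "i - 1"] by simp
  qed
  have key: "\<And>w n. w \<in> A z \<Longrightarrow> (\<Sum>i=1..n. lam i * inner w (y i - z))
       + (1 - \<sigma>\<^sup>2) / 2 * (\<Sum>i=1..n. (norm (x (i - 1) - y i))\<^sup>2) \<le> E 0 - E n"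
  proof -
    fix w n assume w: "w \<in> A z"
    show "(\<Sum>i=1..n. lam i * inner w (y i - z))
       + (1 - \<sigma>\<^sup>2) / 2 * (\<Sum>i=1..n. (norm (x (i - 1) - y i))\<^sup>2) \<le> E 0 - E n"
    proof (induction n)
      case 0 then show ?case by simp
    next
      case (Suc n)
      have en: "inner (y (Suc n) - z) (v (Suc n) - w) \<ge> - eps (Suc n)"
        using incl[of n] w unfolding enlargement_def by auto
      have st: "lam (Suc n) * inner w (y (Suc n) - z) + (1 - \<sigma>\<^sup>2) / 2 * (norm (x n - y (Suc n)))\<^sup>2
         \<le> E n - E (Suc n)"
        unfolding E_def upd[of n] by (rule step[OF lam_pos en err])
      show ?case using Suc st by (simp add: distrib_left)
    qed
  qed
  have E0: "E k \<ge> 0" unfolding E_def by simp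
  have p1: "\<forall>w\<in>A z. (\<Sum>i=1..k. lam i * inner w (y i - z)) + (1 - \<sigma>\<^sup>2) / 2 * S \<le> E 0 - E k"
    using key unfolding S_def by blast
  have sig: "1 - \<sigma>\<^sup>2 > 0" using sigma by (simp add: power_less_one_iff)
  have p2: "\<forall>w\<in>A z. inner w ((1 / \<Lambda>) *\<^sub>R (\<Sum>i=1..k. lam i *\<^sub>R y i) - z) \<le> E 0 / \<Lambda>"
  proof
    fix w assume w: "w \<in> A z"
    have eq: "(\<Sum>i=1..k. lam i * inner w (y i - z)) = \<Lambda> * inner w ((1 / \<Lambda>) *\<^sub>R (\<Sum>i=1..k. lam i *\<^sub>R y i) - z)"
    proof -
      have "(\<Sum>i=1..k. lam i * inner w (y i - z)) = (\<Sum>i=1..k. lam i * inner w (y i)) - \<Lambda> * inner w z"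
        by (simp add: \<Lambda>_def inner_diff_right right_diff_distrib sum_subtractf sum_distrib_right)
      also have "(\<Sum>i=1..k. lam i * inner w (y i)) = inner w (\<Sum>i=1..k. lam i *\<^sub>R y i)"
        by (simp add: inner_sum_right)
      also have "inner w (\<Sum>i=1..k. lam i *\<^sub>R y i) - \<Lambda> * inner w z
          = \<Lambda> * inner w ((1 / \<Lambda>) *\<^sub>R (\<Sum>i=1..k. lam i *\<^sub>R y i) - z)"
        using Lpos by (simp add: inner_diff_right right_diff_distrib)
      finally show ?thesis .
    qed
    have "\<Lambda> * inner w ((1 / \<Lambda>) *\<^sub>R (\<Sum>i=1..k. lam i *\<^sub>R y i) - z) \<le> E 0"
    proof -
      have c: "(1 - \<sigma>\<^sup>2) / 2 * S \<ge> 0" using S0 sig by simp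
      have "(\<Sum>i=1..k. lam i * inner w (y i - z)) + (1 - \<sigma>\<^sup>2) / 2 * S \<le> E 0 - E k"
        using p1 w by blast
      then have "(\<Sum>i=1..k. lam i * inner w (y i - z)) \<le> E 0" using c E0 by linarith
      then show ?thesis using eq by simp
    qed
    then show "inner w ((1 / \<Lambda>) *\<^sub>R (\<Sum>i=1..k. lam i *\<^sub>R y i) - z) \<le> E 0 / \<Lambda>"
      using Lpos by (simp add: pos_le_divide_eq mult.commute)
  qed
  have p3: "\<forall>zs. 0 \<in> A zs \<longrightarrow> S \<le> (norm (x 0 - zs))\<^sup>2 / (1 - \<sigma>\<^sup>2)"
  proof (intro allI impI)
    fix zs assume zs: "0 \<in> A zs"
    have "(1 - \<sigma>\<^sup>2) / 2 * S \<le> (1/2) * (norm (x 0 - zs))\<^sup>2 - (1/2) * (norm (x k - zs))\<^sup>2"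
    proof -
      have "(\<Sum>i=1..k. lam i * inner 0 (y i - zs)) + (1 - \<sigma>\<^sup>2) / 2 * S
         \<le> (1/2) * (norm (x 0 - zs))\<^sup>2 - (1/2) * (norm (x k - zs))\<^sup>2"
      proof -
        fix w n
        show ?thesis
        proof -
          have "\<And>n. (\<Sum>i=1..n. lam i * inner 0 (y i - zs))
            + (1 - \<sigma>\<^sup>2) / 2 * (\<Sum>i=1..n. (norm (x (i - 1) - y i))\<^sup>2)
            \<le> (1/2) * (norm (x 0 - zs))\<^sup>2 - (1/2) * (norm (x n - zs))\<^sup>2"
          proof -
            fix n show "(\<Sum>i=1..n. lam i * inner 0 (y i - zs))
            + (1 - \<sigma>\<^sup>2) / 2 * (\<Sum>i=1..n. (norm (x (i - 1) - y i))\<^sup>2)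
            \<le> (1/2) * (norm (x 0 - zs))\<^sup>2 - (1/2) * (norm (x n - zs))\<^sup>2"
            proof (induction n)
              case 0 then show ?case by simp
            next
              case (Suc n)
              have en: "inner (y (Suc n) - zs) (v (Suc n) - 0) \<ge> - eps (Suc n)"
                using incl[of n] zs unfolding enlargement_def by (metis (no_types, lifting) mem_Collect_eq)
              have st: "lam (Suc n) * inner 0 (y (Suc n) - zs) + (1 - \<sigma>\<^sup>2) / 2 * (norm (x n - y (Suc n)))\<^sup>2
                 \<le> (1/2) * (norm (x n - zs))\<^sup>2 - (1/2) * (norm (x (Suc n) - zs))\<^sup>2"
                unfolding upd[of n] by (rule step[OF lam_pos en err])
              show ?case using Suc st by (simp add: distrib_left)
            qed
          qed
          then show ?thesis unfolding S_def .
        qed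
      qed
      then show ?thesis by simp
    qed
    moreover have "(norm (x k - zs))\<^sup>2 \<ge> 0" by simp
    ultimately have "(1 - \<sigma>\<^sup>2) * S \<le> (norm (x 0 - zs))\<^sup>2" by linarith
    then show "S \<le> (norm (x 0 - zs))\<^sup>2 / (1 - \<sigma>\<^sup>2)" using sig by (simp add: pos_le_divide_eq mult.commute)
  qed
  show "let E = (\<lambda>j. (1/2) * (norm (x j - z))\<^sup>2);
                ytil = (1 / (\<Sum>i=1..k. lam i)) *\<^sub>R (\<Sum>i=1..k. lam i *\<^sub>R y i) in
            (\<forall>w\<in>A z. (\<Sum>i=1..k. lam i * inner w (y i - z))
                 + (1 - \<sigma>\<^sup>2) / 2 * (\<Sum>i=1..k. (norm (x (i - 1) - y i))\<^sup>2) \<le> E 0 - E k)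
          \<and> (\<forall>w\<in>A z. inner w (ytil - z) \<le> E 0 / (\<Sum>i=1..k. lam i))
          \<and> (\<forall>zs. 0 \<in> A zs \<longrightarrow>
                (\<Sum>i=1..k. (norm (x (i - 1) - y i))\<^sup>2) \<le> (norm (x 0 - zs))\<^sup>2 / (1 - \<sigma>\<^sup>2))"
    unfolding Let_def using p1 p2 p3 unfolding E_def \<Lambda>_def S_def by (intro conjI) assumption+
qed

end
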